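(* Let $X\subseteq\mathbb{R}^n$ and let $F:X\rightrightarrows\mathbb{R}^m$ be a set-valued function with open graph and nonempty monovex values. Then $F$ has a continuous selection: there is a continuous function $f:X\to\mathbb{R}^m$ with $f(x)\in F(x)$ for every $x\in X$.
   Context: A set $B \subseteq \mathbb{R}^m$ is monovex if for every $x,y \in B$ there is a continuous path $\gamma:[0,1]\to B$ with $\gamma(0)=x$, $\gamma(1)=y$ and each coordinate $\gamma_i$ monotone (nondecreasing or nonincreasing). The graph of $F$ is $\{(x,y)\in X\times\mathbb{R}^m: y\in F(x)\}$, and "open graph" means this set is open in $X\times\mathbb{R}^m$. *)

theory Defs
  imports "HOL-Analysis.Analysis"
begin

definition monovex :: "(real ^ 'm) set \<Rightarrow> bool" where
  "monovex B \<longleftrightarrow>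
     (\<forall>x\<in>B. \<forall>y\<in>B. \<exists>\<gamma> :: real \<Rightarrow> real ^ 'm.
        continuous_on {0..1} \<gamma> \<and> \<gamma> ` {0..1} \<subseteq> B \<and> \<gamma> 0 = x \<and> \<gamma> 1 = y \<and>
        (\<forall>i. mono_on {0..1} (\<lambda>t. \<gamma> t $ i) \<or> antimono_on {0..1} (\<lambda>t. \<gamma> t $ i)))"

definition graph_on :: "'a set \<Rightarrow> ('a \<Rightarrow> 'b set) \<Rightarrow> ('a \<times> 'b) set" where
  "graph_on X F = {(x, y). x \<in> X \<and> y \<in> F x}"

end

theory Submission imports Defs begin

lemma convex_selection:
  fixes X :: "'a::{metric_space,second_countable_topology} set"
    and G :: "'a \<Rightarrow> 'b::real_normed_vector set"
  assumes loc: "\<And>x y. x \<in> X \<Longrightarrow> y \<in> G x \<Longrightarrow> \<exists>U. open U \<and> x \<in> U \<and> (\<forall>x'\<in>X \<inter> U. y \<in> G x')"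
    and ne: "\<And>x. x \<in> X \<Longrightarrow> G x \<noteq> {}"
    and cvx: "\<And>x. x \<in> X \<Longrightarrow> convex (G x)"
  shows "\<exists>f. continuous_on X f \<and> (\<forall>x\<in>X. f x \<in> G x)"
proof -
  define \<C> where "\<C> = {U. open U \<and> (\<exists>y. \<forall>x'\<in>X \<inter> U. y \<in> G x')}"
  have XC: "X \<subseteq> \<Union>\<C>"
  proof
    fix x assume "x \<in> X"
    then obtain y where "y \<in> G x" using ne by blast
    then obtain U where "open U" "x \<in> U" "\<forall>x'\<in>X \<inter> U. y \<in> G x'" using loc \<open>x \<in> X\<close> by blast
    then show "x \<in> \<Union>\<C>" unfolding \<C>_def by blast
  qed
  obtain \<C>' where C'1: "X \<subseteq> \<Union> \<C>'"
    and C'2: "\<And>U. U \<in> \<C>' \<Longrightarrow> open U \<and> (\<exists>T. T \<in> \<C> \<and> U \<subseteq> T)"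
    and C'3: "\<And>x. x \<in> X \<Longrightarrow> \<exists>V. open V \<and> x \<in> V \<and> finite {U. U \<in> \<C>' \<and> (U \<inter> V \<noteq> {})}"
    using paracompact [OF XC] unfolding \<C>_def by blast
  have "\<exists>y. \<forall>x'\<in>X \<inter> U. y \<in> G x'" if UC: "U \<in> \<C>'" for U
  proof -
    obtain T where "T \<in> \<C>" "U \<subseteq> T" using C'2 UC by blast
    then show ?thesis unfolding \<C>_def by blast
  qed
  then obtain Y where Y: "\<And>U x'. U \<in> \<C>' \<Longrightarrow> x' \<in> X \<inter> U \<Longrightarrow> Y U \<in> G x'" by metis
  obtain H :: "['a set, 'a] \<Rightarrow> real"
    where Hcont: "\<And>Z. Z \<in> \<C>' \<Longrightarrow> continuous_on X (H Z) \<and> (\<forall>x\<in>X. 0 \<le> H Z x)"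
      and Heq0: "\<And>x Z. \<lbrakk>Z \<in> \<C>'; x \<in> X; x \<notin> Z\<rbrakk> \<Longrightarrow> H Z x = 0"
      and H1: "\<And>x. x \<in> X \<Longrightarrow> supp_sum (\<lambda>W. H W x) \<C>' = 1"
      and Hfin: "\<And>x. x \<in> X \<Longrightarrow> \<exists>V. open V \<and> x \<in> V \<and> finite {U \<in> \<C>'. \<exists>x\<in>V. H U x \<noteq> 0}"
    apply (rule subordinate_partition_of_unity [OF C'1 _ C'3])
    using C'2 by auto
  define f where "f x = supp_sum (\<lambda>T. H T x *\<^sub>R Y T) \<C>'" for x
  show ?thesis
  proof (intro exI conjI ballI)
    fix x assume "x \<in> X"
    show "f x \<in> G x"
      unfolding f_def
      apply (rule convex_supp_sum [OF cvx[OF \<open>x \<in> X\<close>] H1[OF \<open>x \<in> X\<close>]])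
      using Hcont Heq0 Y \<open>x \<in> X\<close> by blast
  next
    show "continuous_on X f"
    proof (clarsimp simp: continuous_on_eq_continuous_within)
      fix a assume "a \<in> X"
      obtain N where N: "open N" "a \<in> N"
        and finN: "finite {U \<in> \<C>'. \<exists>a\<in>N. H U a \<noteq> 0}"
        using Hfin \<open>a \<in> X\<close> by auto
      show "continuous (at a within X) f"
      proof (rule continuous_transform_within_openin)
        show "continuous (at a within X) (\<lambda>x. \<Sum>T\<in>{U \<in> \<C>'. \<exists>x\<in>N. H U x \<noteq> 0}. H T x *\<^sub>R Y T)"
        proof (intro continuous_sum continuous_scaleR continuous_const)
          fix T assume "T \<in> {U \<in> \<C>'. \<exists>x\<in>N. H U x \<noteq> 0}"
          then have "continuous_on X (H T)" using Hcont by blast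
          then show "continuous (at a within X) (H T)"
            using \<open>a \<in> X\<close> continuous_on_eq_continuous_within by blast
        qed
        show "openin (top_of_set X) (X \<inter> N)" using N by blast
        show "a \<in> X \<inter> N" using N \<open>a \<in> X\<close> by blast
        show "\<And>x. x \<in> X \<inter> N \<Longrightarrow>
                (\<Sum>T \<in> {U \<in> \<C>'. \<exists>x\<in>N. H U x \<noteq> 0}. H T x *\<^sub>R Y T) = f x"
          unfolding f_def
          by (auto simp: supp_sum_def support_on_def intro: sum.mono_neutral_right [OF finN])
      qed
    qed
  qed
qed

lemma graph_local:
  assumes "openin (top_of_set (X \<times> (UNIV :: 'b::topological_space set))) (graph_on X F)"
    and "x \<in> X" "y \<in> F x"
  shows "\<exists>U. open U \<and> x \<in> U \<and> (\<forall>x'\<in>X \<inter> U. y \<in> F x')"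
proof -
  obtain T where T: "open T" "graph_on X F = T \<inter> (X \<times> UNIV)"
    using assms(1) by (auto simp: openin_open)
  have "(x, y) \<in> T" using T assms by (auto simp: graph_on_def)
  then obtain U V where "open U" "open V" "x \<in> U" "y \<in> V" "U \<times> V \<subseteq> T"
    using open_prod_elim[OF \<open>open T\<close> \<open>(x, y) \<in> T\<close>] by (metis mem_Sigma_iff)
  then show ?thesis
    using T by (rule_tac x=U in exI) (auto simp: graph_on_def set_eq_iff)
qed

definition upd :: "'m \<Rightarrow> real \<Rightarrow> real ^ 'm \<Rightarrow> real ^ 'm" where
  "upd j c y = (\<chi> i. if i = j then c else y $ i)"

lemma continuous_on_upd:
  assumes "continuous_on S a" "continuous_on S b"
  shows "continuous_on S (\<lambda>x. upd j (a x) (b x))"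
  unfolding upd_def
proof (rule continuous_on_vec_lambda, goal_cases)
  case (1 i)
  show ?case by (cases "i = j") (simp_all add: assms continuous_on_component)
qed

lemma upd_nth: "upd j c y $ i = (if i = j then c else y $ i)"
  by (simp add: upd_def)

lemma upd_same: "y $ j = c \<Longrightarrow> upd j c y = y"
  by (simp add: upd_def vec_eq_iff)

lemma monovex_slice:
  fixes B :: "(real ^ 'm) set" and j :: 'm
  assumes "monovex B"
  shows "monovex {y. upd j c y \<in> B}"
  unfolding monovex_def
proof (intro ballI)
  fix y1 y2 assume y1: "y1 \<in> {y. upd j c y \<in> B}" and y2: "y2 \<in> {y. upd j c y \<in> B}"
  obtain \<gamma> :: "real \<Rightarrow> real ^ 'm" where g: "continuous_on {0..1} \<gamma>" "\<gamma> ` {0..1} \<subseteq> B"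
     "\<gamma> 0 = upd j c y1" "\<gamma> 1 = upd j c y2"
     and gm: "\<And>i. mono_on {0..1} (\<lambda>t. \<gamma> t $ i) \<or> antimono_on {0..1} (\<lambda>t. \<gamma> t $ i)"
  proof -
    have "upd j c y1 \<in> B" "upd j c y2 \<in> B" using y1 y2 by auto
    with assms show thesis unfolding monovex_def using that by blast
  qed
  have gj: "\<gamma> t $ j = c" if "t \<in> {0..1}" for t
  proof -
    have e0: "\<gamma> 0 $ j = c" and e1: "\<gamma> 1 $ j = c" using g(3,4) by (simp_all add: upd_nth)
    have t: "0 \<le> t" "t \<le> 1" using that by auto
    from gm[of j] show ?thesis
    proof
      assume m: "mono_on {0..1} (\<lambda>t. \<gamma> t $ j)"
      have "\<gamma> 0 $ j \<le> \<gamma> t $ j" by (rule mono_onD[OF m]) (use t in auto)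
      moreover have "\<gamma> t $ j \<le> \<gamma> 1 $ j" by (rule mono_onD[OF m]) (use t in auto)
      ultimately show ?thesis using e0 e1 by linarith
    next
      assume m: "antimono_on {0..1} (\<lambda>t. \<gamma> t $ j)"
      have "\<gamma> t $ j \<le> \<gamma> 0 $ j" by (rule monotone_onD[OF m]) (use t in auto)
      moreover have "\<gamma> 1 $ j \<le> \<gamma> t $ j" by (rule monotone_onD[OF m]) (use t in auto)
      ultimately show ?thesis using e0 e1 by linarith
    qed
  qed
  define \<delta> where "\<delta> = (\<lambda>t. (\<chi> i. if i = j then (1 - t) * y1 $ j + t * y2 $ j else \<gamma> t $ i))"
  show "\<exists>\<gamma> :: real \<Rightarrow> real ^ 'm. continuous_on {0..1} \<gamma> \<and> \<gamma> ` {0..1} \<subseteq> {y. upd j c y \<in> B} \<and> \<gamma> 0 = y1 \<and> \<gamma> 1 = y2 \<and>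
        (\<forall>i. mono_on {0..1} (\<lambda>t. \<gamma> t $ i) \<or> antimono_on {0..1} (\<lambda>t. \<gamma> t $ i))"
  proof (rule exI[of _ \<delta>], intro conjI allI)
    show "continuous_on {0..1} \<delta>"
      unfolding \<delta>_def
    proof (rule continuous_on_vec_lambda, goal_cases)
      case (1 i)
      show ?case
        by (cases "i = j") (simp_all add: continuous_intros g(1))
    qed
    have "upd j c (\<delta> t) = \<gamma> t" if "t \<in> {0..1}" for t
      using gj[OF that] by (simp add: vec_eq_iff upd_nth \<delta>_def)
    then show "\<delta> ` {0..1} \<subseteq> {y. upd j c y \<in> B}" using g(2) by auto
    show "\<delta> 0 = y1" using g(3) by (simp add: \<delta>_def vec_eq_iff upd_nth)
    show "\<delta> 1 = y2" using g(4) by (simp add: \<delta>_def vec_eq_iff upd_nth)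
    fix i
    show "mono_on {0..1} (\<lambda>t. \<delta> t $ i) \<or> antimono_on {0..1} (\<lambda>t. \<delta> t $ i)"
    proof (cases "i = j")
      case True
      have e: "\<delta> t $ i = y1 $ j + t * (y2 $ j - y1 $ j)" for t
        using True by (simp add: \<delta>_def algebra_simps)
      show ?thesis
      proof (cases "y1 $ j \<le> y2 $ j")
        case True
        have "mono_on {0..1} (\<lambda>t. \<delta> t $ i)"
        proof (rule monotone_onI)
          fix r s :: real assume "r \<le> s"
          then have "r * (y2 $ j - y1 $ j) \<le> s * (y2 $ j - y1 $ j)"
            using True by (intro mult_right_mono) auto
          then show "\<delta> r $ i \<le> \<delta> s $ i" unfolding e by linarith
        qed
        then show ?thesis by blast
      next
        case False
        have "antimono_on {0..1} (\<lambda>t. \<delta> t $ i)"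
        proof (rule monotone_onI)
          fix r s :: real assume "r \<le> s"
          then have "s * (y1 $ j - y2 $ j) \<ge> r * (y1 $ j - y2 $ j)"
            using False by (intro mult_right_mono) auto
          then show "\<delta> s $ i \<le> \<delta> r $ i" unfolding e by (simp add: algebra_simps)
        qed
        then show ?thesis by blast
      qed
    next
      case False
      then show ?thesis using gm[of i] by (simp add: \<delta>_def)
    qed
  qed
qed


lemma main_induct:
  fixes X :: "(real ^ 'n) set" and F :: "real ^ 'n \<Rightarrow> (real ^ 'm) set"
  assumes "finite S"
    and "openin (top_of_set (X \<times> (UNIV :: (real ^ 'm) set))) (graph_on X F)"
    and "\<forall>x\<in>X. F x \<noteq> {}"
    and "\<forall>x\<in>X. monovex (F x)"
    and "\<forall>x\<in>X. \<forall>y y'. (\<forall>i\<in>S. y $ i = y' $ i) \<longrightarrow> y \<in> F x \<longrightarrow> y' \<in> F x"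
  shows "\<exists>f. continuous_on X f \<and> (\<forall>x\<in>X. f x \<in> F x)"
  using assms
proof (induction S arbitrary: F rule: finite_induct)
  case empty
  show ?case
  proof (intro exI conjI ballI)
    show "continuous_on X (\<lambda>x. 0::real^'m)" by (rule continuous_on_const)
    fix x assume "x \<in> X"
    then obtain y where "y \<in> F x" using empty.prems(2) by blast
    then show "(0::real^'m) \<in> F x" using empty.prems(4) \<open>x \<in> X\<close> by blast
  qed
next
  case (insert j S F)
  define P where "P x = (\<lambda>y. y $ j) ` F x" for x
  have "\<exists>s. continuous_on X s \<and> (\<forall>x\<in>X. s x \<in> P x)"
  proof (rule convex_selection)
    fix x r assume "x \<in> X" "r \<in> P x"
    then obtain y where y: "y \<in> F x" "r = y $ j" by (auto simp: P_def)
    obtain U where "open U" "x \<in> U" "\<forall>x'\<in>X \<inter> U. y \<in> F x'"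
      using graph_local[OF insert.prems(1) \<open>x \<in> X\<close> y(1)] by blast
    then show "\<exists>U. open U \<and> x \<in> U \<and> (\<forall>x'\<in>X \<inter> U. r \<in> P x')" using y by (auto simp: P_def)
  next
    fix x assume "x \<in> X" then show "P x \<noteq> {}" using insert.prems(2) by (auto simp: P_def)
  next
    fix x assume "x \<in> X"
    have "path_connected (F x)"
      using insert.prems(3) \<open>x \<in> X\<close>
      unfolding monovex_def path_connected_def path_def path_image_def pathstart_def pathfinish_def
      by blast
    then have "connected (P x)" unfolding P_def
      by (intro connected_continuous_image path_connected_imp_connected continuous_on_component continuous_on_id)
    then show "convex (P x)" by (simp add: is_interval_connected_1 [symmetric] is_interval_convex_1)
  qed
  then obtain s where s: "continuous_on X s" "\<forall>x\<in>X. s x \<in> P x" by blast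
  define F' where "F' x = {y. upd j (s x) y \<in> F x}" for x
  have sfst: "continuous_on (X \<times> (UNIV :: (real ^ 'm) set)) (\<lambda>z. s (fst z))"
    by (rule continuous_on_compose2[OF s(1) continuous_on_fst]) auto
  have "\<exists>g. continuous_on X g \<and> (\<forall>x\<in>X. g x \<in> F' x)"
  proof (rule insert.IH)
    show "openin (top_of_set (X \<times> UNIV)) (graph_on X F')"
    proof -
      define \<phi> where "\<phi> = (\<lambda>z::(real^'n) \<times> (real^'m). (fst z, upd j (s (fst z)) (snd z)))"
      have c: "continuous_on (X \<times> UNIV) \<phi>"
        unfolding \<phi>_def by (intro continuous_on_Pair continuous_on_fst continuous_on_snd continuous_on_upd sfst continuous_on_id)
      have m: "\<phi> \<in> (X \<times> UNIV) \<rightarrow> (X \<times> UNIV)" by (auto simp: \<phi>_def)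
      have "graph_on X F' = (X \<times> UNIV) \<inter> \<phi> -` graph_on X F"
        by (auto simp: graph_on_def F'_def \<phi>_def)
      then show ?thesis using continuous_openin_preimage[OF c m insert.prems(1)] by simp
    qed
    show "\<forall>x\<in>X. F' x \<noteq> {}"
    proof
      fix x assume "x \<in> X"
      then obtain y where "y \<in> F x" "y $ j = s x" using s(2) by (auto simp: P_def)
      then have "y \<in> F' x" by (simp add: F'_def upd_same)
      then show "F' x \<noteq> {}" by blast
    qed
    show "\<forall>x\<in>X. monovex (F' x)"
      using insert.prems(3) unfolding F'_def by (blast intro: monovex_slice)
    show "\<forall>x\<in>X. \<forall>y y'. (\<forall>i\<in>S. y $ i = y' $ i) \<longrightarrow> y \<in> F' x \<longrightarrow> y' \<in> F' x"
    proof (intro ballI allI impI)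
      fix x y y' assume "x \<in> X" "\<forall>i\<in>S. y $ i = y' $ i" "y \<in> F' x"
      then have "\<forall>i\<in>insert j S. upd j (s x) y $ i = upd j (s x) y' $ i" "upd j (s x) y \<in> F x"
        by (auto simp: upd_nth F'_def)
      then show "y' \<in> F' x" using insert.prems(4) \<open>x \<in> X\<close> unfolding F'_def by blast
    qed
  qed
  then obtain g where g: "continuous_on X g" "\<forall>x\<in>X. g x \<in> F' x" by blast
  show ?case
  proof (intro exI conjI ballI)
    show "continuous_on X (\<lambda>x. upd j (s x) (g x))"
      by (intro continuous_on_upd s(1) g(1))
    fix x assume "x \<in> X" then show "upd j (s x) (g x) \<in> F x" using g(2) by (simp add: F'_def)
  qed
qed

theorem lemma3:
  fixes X :: "(real ^ 'n) set" and F :: "real ^ 'n \<Rightarrow> (real ^ 'm) set"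
  assumes "openin (top_of_set (X \<times> (UNIV :: (real ^ 'm) set))) (graph_on X F)"
    and "\<And>x. x \<in> X \<Longrightarrow> F x \<noteq> {}"
    and "\<And>x. x \<in> X \<Longrightarrow> monovex (F x)"
  shows "\<exists>f :: real ^ 'n \<Rightarrow> real ^ 'm. continuous_on X f \<and> (\<forall>x\<in>X. f x \<in> F x)"
proof (rule main_induct[of "UNIV :: 'm set"])
  show "finite (UNIV :: 'm set)" by simp
  show "openin (top_of_set (X \<times> (UNIV :: (real ^ 'm) set))) (graph_on X F)" using assms(1) .
  show "\<forall>x\<in>X. F x \<noteq> {}" using assms(2) by blast
  show "\<forall>x\<in>X. monovex (F x)" using assms(3) by blast
  show "\<forall>x\<in>X. \<forall>y y'. (\<forall>i\<in>UNIV. y $ i = y' $ i) \<longrightarrow> y \<in> F x \<longrightarrow> y' \<in> F x"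
  proof (intro ballI allI impI)
    fix x y y' assume "\<forall>i\<in>UNIV. y $ i = (y' :: real ^ 'm) $ i" "y \<in> F x"
    then have "y = y'" by (simp add: vec_eq_iff)
    then show "y' \<in> F x" using \<open>y \<in> F x\<close> by simp
  qed
qed

end
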